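(* Let $\tau\in(0,\infty]$ and let $\{(\theta_i,\omega_i)\}_{i=1}^N$ be a smooth solution on $[0,\tau)$ of the second-order Kuramoto model with bonding force $$\dot\theta_i=\omega_i,\qquad \dot\omega_i=\frac{1}{N}\sum_{j=1}^N\big[\kappa_0\cos(\theta_j-\theta_i)+\kappa_1\big](\omega_j-\omega_i)+\frac{\kappa_2}{N}\sum_{j=1}^N\big[|\theta_j-\theta_i|-\theta^\infty_{ij}\big]\operatorname{sgn}(\theta_j-\theta_i),\quad i\in[N].$$ Then for all $t\in[0,\tau)$, $$\mathcal{E}(t)+\int_0^t\mathcal{P}(s)\,ds=\mathcal{E}(0),\qquad \mathcal{P}:=\frac{1}{2N}\sum_{i,j=1}^N\big(\kappa_0\cos(\theta_j-\theta_i)+\kappa_1\big)|\omega_j-\omega_i|^2.$$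
   Context: $N\ge 2$, $[N]=\{1,\dots,N\}$, $\kappa_0,\kappa_1,\kappa_2\ge 0$ are constants, $[\theta^\infty_{ij}]$ is a real $N\times N$ matrix with $\theta^\infty_{ii}=0$ and $\theta^\infty_{ij}=\theta^\infty_{ji}$; $\operatorname{sgn}$ is the sign function. The total energy is $\mathcal{E}:=\frac12\sum_{i=1}^N|\omega_i|^2+\frac{\kappa_2}{4N}\sum_{i,j=1}^N\big(|\theta_j-\theta_i|-\theta^\infty_{ij}\big)^2$. *)

theory Defs
  imports "HOL-Analysis.Analysis"
begin

definition kb_energy ::
  "nat \<Rightarrow> real \<Rightarrow> (nat \<Rightarrow> nat \<Rightarrow> real) \<Rightarrow> (nat \<Rightarrow> real \<Rightarrow> real) \<Rightarrow> (nat \<Rightarrow> real \<Rightarrow> real) \<Rightarrow> real \<Rightarrow> real"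
where
  "kb_energy N \<kappa>2 \<theta>inf \<theta> \<omega> t =
     (1/2) * (\<Sum>i\<in>{1..N}. \<bar>\<omega> i t\<bar>^2)
     + \<kappa>2 / (4 * real N) *
       (\<Sum>i\<in>{1..N}. \<Sum>j\<in>{1..N}. (\<bar>\<theta> j t - \<theta> i t\<bar> - \<theta>inf i j)^2)"

definition kb_production ::
  "nat \<Rightarrow> real \<Rightarrow> real \<Rightarrow> (nat \<Rightarrow> real \<Rightarrow> real) \<Rightarrow> (nat \<Rightarrow> real \<Rightarrow> real) \<Rightarrow> real \<Rightarrow> real"
where
  "kb_production N \<kappa>0 \<kappa>1 \<theta> \<omega> t =
     1 / (2 * real N) *
       (\<Sum>i\<in>{1..N}. \<Sum>j\<in>{1..N}.
          (\<kappa>0 * cos (\<theta> j t - \<theta> i t) + \<kappa>1) * \<bar>\<omega> j t - \<omega> i t\<bar>^2)"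

end

theory Submission
  imports Defs
begin


lemma sq_deriv:
  fixes f :: "real \<Rightarrow> real"
  assumes "(f has_real_derivative f') (at s within S)"
  shows "((\<lambda>s. (f s)^2) has_real_derivative (2 * f s * f')) (at s within S)"
  using DERIV_power[OF assms, of 2] by (simp add: ac_simps)

lemma sqrt_deriv:
  fixes f :: "real \<Rightarrow> real"
  assumes "(f has_real_derivative f') (at s within S)" "0 < d"
  shows "((\<lambda>s. sqrt ((f s)^2 + d^2)) has_real_derivative (f s / sqrt ((f s)^2 + d^2) * f')) (at s within S)"
proof -
  have pos: "0 < (f s)^2 + d^2" using assms(2) by (simp add: add_nonneg_pos)
  have "((\<lambda>s. (f s)^2 + d^2) has_real_derivative (2 * f s * f')) (at s within S)"
    using assms(1) by (auto intro!: derivative_eq_intros)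
  from DERIV_chain2[OF DERIV_real_sqrt[OF pos] this] show ?thesis
    using pos by (simp add: field_simps)
qed

lemma sq_term_deriv:
  fixes f :: "real \<Rightarrow> real"
  assumes "(f has_real_derivative f') (at s within S)" "0 < d"
  shows "((\<lambda>s. (sqrt ((f s)^2 + d^2) - c)^2) has_real_derivative
     (2 * (sqrt ((f s)^2 + d^2) - c) * ((f s / sqrt ((f s)^2 + d^2)) * f'))) (at s within S)"
proof -
  have "((\<lambda>s. sqrt ((f s)^2 + d^2) - c) has_real_derivative (f s / sqrt ((f s)^2 + d^2) * f')) (at s within S)"
    using sqrt_deriv[OF assms] DERIV_diff[OF _ DERIV_const, of _ _ s S c] by simp
  from sq_deriv[OF this] show ?thesis .
qed

lemma phi_lim:
  fixes d :: "nat \<Rightarrow> real"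
  assumes "d \<longlonglongrightarrow> 0"
  shows "(\<lambda>k. sqrt (y^2 + (d k)^2)) \<longlonglongrightarrow> \<bar>y\<bar>"
proof -
  have "(\<lambda>k. sqrt (y^2 + (d k)^2)) \<longlonglongrightarrow> sqrt (y^2 + 0^2)"
    by (intro tendsto_intros assms)
  then show ?thesis by simp
qed

lemma sgn_lim:
  fixes d :: "nat \<Rightarrow> real"
  assumes "d \<longlonglongrightarrow> 0"
  shows "(\<lambda>k. y / sqrt (y^2 + (d k)^2)) \<longlonglongrightarrow> sgn y"
proof (cases "y = 0")
  case True then show ?thesis by simp
next
  case False
  have "(\<lambda>k. y / sqrt (y^2 + (d k)^2)) \<longlonglongrightarrow> y / \<bar>y\<bar>"
    by (intro tendsto_intros phi_lim assms) (use False in simp)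
  then show ?thesis by (simp add: real_sgn_eq)
qed

lemma absW:
  fixes th w c :: "nat \<Rightarrow> real" and N k0 k1 k2 :: real
  assumes "k0 \<ge> 0" "k1 \<ge> 0" "k2 \<ge> 0" "N > 0"
  shows "\<bar>1 / N * (\<Sum>j\<in>I. (k0 * cos (th j - th i) + k1) * (w j - w i))
          + k2 / N * (\<Sum>j\<in>I. (\<bar>th j - th i\<bar> - c j) * sgn (th j - th i))\<bar>
     \<le> 1 / N * (\<Sum>j\<in>I. (k0 + k1) * \<bar>w j - w i\<bar>) + k2 / N * (\<Sum>j\<in>I. \<bar>th j - th i\<bar> + \<bar>c j\<bar>)"
proof -
  have t1: "\<bar>\<Sum>j\<in>I. (k0 * cos (th j - th i) + k1) * (w j - w i)\<bar> \<le> (\<Sum>j\<in>I. (k0 + k1) * \<bar>w j - w i\<bar>)"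
  proof (rule order_trans[OF sum_abs], rule sum_mono)
    fix j
    have "\<bar>k0 * cos (th j - th i) + k1\<bar> \<le> k0 + k1"
    proof -
      have "\<bar>cos (th j - th i)\<bar> \<le> 1" by simp
      then have "\<bar>k0 * cos (th j - th i)\<bar> \<le> k0" using assms(1)
        by (simp add: abs_mult mult_left_le)
      then show ?thesis using assms(2) by linarith
    qed
    then show "\<bar>(k0 * cos (th j - th i) + k1) * (w j - w i)\<bar> \<le> (k0 + k1) * \<bar>w j - w i\<bar>"
      by (simp add: abs_mult mult_right_mono)
  qed
  have t2: "\<bar>\<Sum>j\<in>I. (\<bar>th j - th i\<bar> - c j) * sgn (th j - th i)\<bar> \<le> (\<Sum>j\<in>I. \<bar>th j - th i\<bar> + \<bar>c j\<bar>)"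
  proof (rule order_trans[OF sum_abs], rule sum_mono)
    fix j
    have "\<bar>sgn (th j - th i)\<bar> \<le> 1" by (simp add: sgn_if)
    then have "\<bar>(\<bar>th j - th i\<bar> - c j) * sgn (th j - th i)\<bar> \<le> \<bar>\<bar>th j - th i\<bar> - c j\<bar>"
      by (simp add: abs_mult mult_left_le)
    then show "\<bar>(\<bar>th j - th i\<bar> - c j) * sgn (th j - th i)\<bar> \<le> \<bar>th j - th i\<bar> + \<bar>c j\<bar>" by linarith
  qed
  have "\<bar>1 / N * (\<Sum>j\<in>I. (k0 * cos (th j - th i) + k1) * (w j - w i))\<bar> \<le> 1 / N * (\<Sum>j\<in>I. (k0 + k1) * \<bar>w j - w i\<bar>)"
    using t1 assms(4) by (simp add: abs_mult divide_right_mono)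
  moreover have "\<bar>k2 / N * (\<Sum>j\<in>I. (\<bar>th j - th i\<bar> - c j) * sgn (th j - th i))\<bar> \<le> k2 / N * (\<Sum>j\<in>I. \<bar>th j - th i\<bar> + \<bar>c j\<bar>)"
  proof -
    have k: "0 \<le> k2 / N" using assms(3,4) by simp
    show ?thesis unfolding abs_mult abs_of_nonneg[OF k] by (rule mult_left_mono[OF t2 k])
  qed
  ultimately show ?thesis by (rule order_trans[OF abs_triangle_ineq add_mono])
qed

lemma absterm:
  fixes y c z d :: real
  assumes "0 < d" "d \<le> 1"
  shows "\<bar>2 * (sqrt (y^2 + d^2) - c) * ((y / sqrt (y^2 + d^2)) * z)\<bar> \<le> 2 * (\<bar>y\<bar> + 1 + \<bar>c\<bar>) * \<bar>z\<bar>"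
proof -
  define r where "r = sqrt (y^2 + d^2)"
  have pos: "0 < r" unfolding r_def using assms by (simp add: add_nonneg_pos)
  have "sqrt (y^2) \<le> r" unfolding r_def by (rule real_sqrt_le_mono) simp
  then have ge: "\<bar>y\<bar> \<le> r" by simp
  have "r \<le> \<bar>y\<bar> + \<bar>d\<bar>" unfolding r_def by (rule sqrt_sum_squares_le_sum_abs)
  then have le: "r \<le> \<bar>y\<bar> + 1" using assms by linarith
  have q1: "\<bar>y / r\<bar> = \<bar>y\<bar> / r" using pos by (simp add: abs_divide)
  have q2: "\<bar>y\<bar> / r \<le> 1" using pos ge by (simp add: pos_divide_le_eq)
  have q: "\<bar>y / r\<bar> \<le> 1" unfolding q1 by (rule q2)
  have a: "\<bar>r - c\<bar> \<le> \<bar>y\<bar> + 1 + \<bar>c\<bar>" using le pos by linarith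
  have e: "\<bar>2 * (r - c) * ((y / r) * z)\<bar> = 2 * (\<bar>r - c\<bar> * (\<bar>y / r\<bar> * \<bar>z\<bar>))" by (simp only: abs_mult abs_numeral mult.assoc)
  have m: "\<bar>r - c\<bar> * (\<bar>y / r\<bar> * \<bar>z\<bar>) \<le> (\<bar>y\<bar> + 1 + \<bar>c\<bar>) * (1 * \<bar>z\<bar>)"
    by (rule mult_mono[OF a mult_right_mono[OF q abs_ge_zero]]) auto
  have "\<bar>2 * (r - c) * ((y / r) * z)\<bar> \<le> 2 * (\<bar>y\<bar> + 1 + \<bar>c\<bar>) * \<bar>z\<bar>"
    unfolding e using m by linarith
  then show ?thesis unfolding r_def .
qed

lemma alg1:
  fixes a :: "nat \<Rightarrow> nat \<Rightarrow> real" and w :: "nat \<Rightarrow> real"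
  assumes "finite I" "\<And>i j. i \<in> I \<Longrightarrow> j \<in> I \<Longrightarrow> a i j = a j i"
  shows "(\<Sum>i\<in>I. \<Sum>j\<in>I. w i * (a i j * (w j - w i))) = - (1/2) * (\<Sum>i\<in>I. \<Sum>j\<in>I. a i j * (w j - w i)^2)"
proof -
  let ?L = "(\<Sum>i\<in>I. \<Sum>j\<in>I. w i * (a i j * (w j - w i)))"
  have "?L = (\<Sum>i\<in>I. \<Sum>j\<in>I. w j * (a j i * (w i - w j)))" by (rule sum.swap)
  also have "\<dots> = (\<Sum>i\<in>I. \<Sum>j\<in>I. w j * (a i j * (w i - w j)))"
    by (intro sum.cong refl) (metis assms(2))
  finally have e: "?L = \<dots>" .
  have "?L + ?L = ?L + (\<Sum>i\<in>I. \<Sum>j\<in>I. w j * (a i j * (w i - w j)))"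
    using e by (rule arg_cong)
  also have "\<dots> = (\<Sum>i\<in>I. \<Sum>j\<in>I. w i * (a i j * (w j - w i)) + w j * (a i j * (w i - w j)))"
    by (simp only: sum.distrib)
  also have "\<dots> = (\<Sum>i\<in>I. \<Sum>j\<in>I. - (a i j * (w j - w i)^2))"
    by (intro sum.cong refl) (simp add: power2_eq_square algebra_simps)
  finally show ?thesis by (simp add: sum_negf)
qed

lemma alg2:
  fixes b :: "nat \<Rightarrow> nat \<Rightarrow> real" and w :: "nat \<Rightarrow> real"
  assumes "finite I" "\<And>i j. i \<in> I \<Longrightarrow> j \<in> I \<Longrightarrow> b i j = - b j i"
  shows "(\<Sum>i\<in>I. \<Sum>j\<in>I. b i j * (w j - w i)) = - 2 * (\<Sum>i\<in>I. w i * (\<Sum>j\<in>I. b i j))"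
proof -
  have "(\<Sum>i\<in>I. \<Sum>j\<in>I. b i j * w j) = (\<Sum>i\<in>I. \<Sum>j\<in>I. b j i * w i)" by (rule sum.swap)
  also have "\<dots> = (\<Sum>i\<in>I. \<Sum>j\<in>I. - (b i j * w i))"
    by (intro sum.cong refl) (metis assms(2) mult_minus_left)
  finally have e: "(\<Sum>i\<in>I. \<Sum>j\<in>I. b i j * w j) = \<dots>" .
  have "(\<Sum>i\<in>I. \<Sum>j\<in>I. b i j * (w j - w i)) = (\<Sum>i\<in>I. \<Sum>j\<in>I. b i j * w j) - (\<Sum>i\<in>I. \<Sum>j\<in>I. b i j * w i)"
    by (simp add: right_diff_distrib sum_subtractf)
  also have "\<dots> = - 2 * (\<Sum>i\<in>I. \<Sum>j\<in>I. b i j * w i)" by (simp add: e sum_negf)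
  finally show ?thesis by (simp add: sum_distrib_left mult.commute)
qed
theorem proposition2p2:
  fixes N :: nat and \<kappa>0 \<kappa>1 \<kappa>2 :: real and \<theta>inf :: "nat \<Rightarrow> nat \<Rightarrow> real"
    and \<tau> :: ereal and \<theta> \<omega> :: "nat \<Rightarrow> real \<Rightarrow> real"
  assumes hN: "N \<ge> 2"
    and hk0: "\<kappa>0 \<ge> 0" and hk1: "\<kappa>1 \<ge> 0" and hk2: "\<kappa>2 \<ge> 0"
    and hdiag: "\<And>i. i \<in> {1..N} \<Longrightarrow> \<theta>inf i i = 0"
    and hsym: "\<And>i j. i \<in> {1..N} \<Longrightarrow> j \<in> {1..N} \<Longrightarrow> \<theta>inf i j = \<theta>inf j i"
    and h\<tau>: "\<tau> > 0"
    and hth: "\<And>i t. i \<in> {1..N} \<Longrightarrow> 0 \<le> t \<Longrightarrow> ereal t < \<tau> \<Longrightarrow>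
        (\<theta> i has_real_derivative \<omega> i t) (at t within {s. 0 \<le> s \<and> ereal s < \<tau>})"
    and hom: "\<And>i t. i \<in> {1..N} \<Longrightarrow> 0 \<le> t \<Longrightarrow> ereal t < \<tau> \<Longrightarrow>
        (\<omega> i has_real_derivative
           (1 / real N) * (\<Sum>j\<in>{1..N}. (\<kappa>0 * cos (\<theta> j t - \<theta> i t) + \<kappa>1) * (\<omega> j t - \<omega> i t))
         + \<kappa>2 / real N * (\<Sum>j\<in>{1..N}. (\<bar>\<theta> j t - \<theta> i t\<bar> - \<theta>inf i j) * sgn (\<theta> j t - \<theta> i t)))
        (at t within {s. 0 \<le> s \<and> ereal s < \<tau>})"
  shows "\<forall>t. 0 \<le> t \<and> ereal t < \<tau> \<longrightarrow>
           kb_energy N \<kappa>2 \<theta>inf \<theta> \<omega> t + integral {0..t} (kb_production N \<kappa>0 \<kappa>1 \<theta> \<omega>)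
             = kb_energy N \<kappa>2 \<theta>inf \<theta> \<omega> 0"
proof (intro allI impI)
  fix t assume ht: "0 \<le> t \<and> ereal t < \<tau>"
  define I where "I = {1..N}"
  have finI: "finite I" unfolding I_def by simp
  have Npos: "real N > 0" using hN by simp
  have sub: "{0..t} \<subseteq> {s. 0 \<le> s \<and> ereal s < \<tau>}"
  proof
    fix s assume "s \<in> {0..t}"
    then have "0 \<le> s" "ereal s \<le> ereal t" by auto
    then show "s \<in> {s. 0 \<le> s \<and> ereal s < \<tau>}" using le_less_trans[of "ereal s" "ereal t" \<tau>] ht by auto
  qed
  define W where "W i s = (1 / real N) * (\<Sum>j\<in>I. (\<kappa>0 * cos (\<theta> j s - \<theta> i s) + \<kappa>1) * (\<omega> j s - \<omega> i s))
         + \<kappa>2 / real N * (\<Sum>j\<in>I. (\<bar>\<theta> j s - \<theta> i s\<bar> - \<theta>inf i j) * sgn (\<theta> j s - \<theta> i s))" for i s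
  have dth: "(\<theta> i has_real_derivative \<omega> i s) (at s within {0..t})" if "i \<in> I" "s \<in> {0..t}" for i s
  proof -
    have "s \<in> {s. 0 \<le> s \<and> ereal s < \<tau>}" using sub that(2) by blast
    then have "(\<theta> i has_real_derivative \<omega> i s) (at s within {s. 0 \<le> s \<and> ereal s < \<tau>})"
      using hth[of i s] that(1) unfolding I_def by auto
    then show ?thesis using sub by (rule DERIV_subset)
  qed
  have dom: "(\<omega> i has_real_derivative W i s) (at s within {0..t})" if "i \<in> I" "s \<in> {0..t}" for i s
  proof -
    have "s \<in> {s. 0 \<le> s \<and> ereal s < \<tau>}" using sub that(2) by blast
    then have "(\<omega> i has_real_derivative W i s) (at s within {s. 0 \<le> s \<and> ereal s < \<tau>})"
      using hom[of i s] that(1) unfolding I_def W_def by auto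
    then show ?thesis using sub by (rule DERIV_subset)
  qed
  have cth: "continuous_on {0..t} (\<theta> i)" if "i \<in> I" for i
    by (rule DERIV_continuous_on[OF dth[OF that]])
  have com: "continuous_on {0..t} (\<omega> i)" if "i \<in> I" for i
    by (rule DERIV_continuous_on[OF dom[OF that]])
  define d where "d k = inverse (real (Suc k))" for k :: nat
  have dlim: "d \<longlonglongrightarrow> 0" unfolding d_def by (rule LIMSEQ_inverse_real_of_nat)
  have dpos: "0 < d k" "d k \<le> 1" for k unfolding d_def by (auto simp: inverse_le_1_iff)
  define \<phi> where "\<phi> k y = sqrt (y^2 + (d k)^2)" for k y
  define Ek where "Ek k s = 1/2 * (\<Sum>i\<in>I. (\<omega> i s)^2) + \<kappa>2 / (4 * real N) * (\<Sum>i\<in>I. \<Sum>j\<in>I. (\<phi> k (\<theta> j s - \<theta> i s) - \<theta>inf i j)^2)" for k s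
  define Dk where "Dk k s = 1/2 * (\<Sum>i\<in>I. 2 * \<omega> i s * W i s) + \<kappa>2 / (4 * real N) * (\<Sum>i\<in>I. \<Sum>j\<in>I. 2 * (\<phi> k (\<theta> j s - \<theta> i s) - \<theta>inf i j) * (((\<theta> j s - \<theta> i s) / \<phi> k (\<theta> j s - \<theta> i s)) * (\<omega> j s - \<omega> i s)))" for k s
  have dE: "(Ek k has_real_derivative Dk k s) (at s within {0..t})" if "s \<in> {0..t}" for k s
  proof -
    have A: "((\<lambda>s. \<Sum>i\<in>I. (\<omega> i s)^2) has_real_derivative (\<Sum>i\<in>I. 2 * \<omega> i s * W i s)) (at s within {0..t})"
      by (rule DERIV_sum) (rule sq_deriv[OF dom[OF _ that]])
    have B: "((\<lambda>s. \<Sum>i\<in>I. \<Sum>j\<in>I. (\<phi> k (\<theta> j s - \<theta> i s) - \<theta>inf i j)^2) has_real_derivative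
       (\<Sum>i\<in>I. \<Sum>j\<in>I. 2 * (\<phi> k (\<theta> j s - \<theta> i s) - \<theta>inf i j) * (((\<theta> j s - \<theta> i s) / \<phi> k (\<theta> j s - \<theta> i s)) * (\<omega> j s - \<omega> i s)))) (at s within {0..t})"
    proof (rule DERIV_sum, rule DERIV_sum)
      fix i j assume ij: "i \<in> I" "j \<in> I"
      have "((\<lambda>s. \<theta> j s - \<theta> i s) has_real_derivative (\<omega> j s - \<omega> i s)) (at s within {0..t})"
        by (rule DERIV_diff[OF dth[OF ij(2) that] dth[OF ij(1) that]])
      from sq_term_deriv[OF this dpos(1), of k "\<theta>inf i j"]
      show "((\<lambda>s. (\<phi> k (\<theta> j s - \<theta> i s) - \<theta>inf i j)^2) has_real_derivative
         2 * (\<phi> k (\<theta> j s - \<theta> i s) - \<theta>inf i j) * (((\<theta> j s - \<theta> i s) / \<phi> k (\<theta> j s - \<theta> i s)) * (\<omega> j s - \<omega> i s))) (at s within {0..t})"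
        unfolding \<phi>_def .
    qed
    show ?thesis unfolding Ek_def Dk_def by (intro DERIV_add DERIV_cmult A B)
  qed
  have ftc: "(Dk k has_integral (Ek k t - Ek k 0)) {0..t}" for k
    by (rule fundamental_theorem_of_calculus)
      (use ht dE in \<open>auto simp: has_real_derivative_iff_has_vector_derivative[symmetric]\<close>)
  have Elim: "(\<lambda>k. Ek k s) \<longlonglongrightarrow> kb_energy N \<kappa>2 \<theta>inf \<theta> \<omega> s" for s
  proof -
    have "(\<lambda>k. Ek k s) \<longlonglongrightarrow> 1/2 * (\<Sum>i\<in>I. (\<omega> i s)^2) + \<kappa>2 / (4 * real N) * (\<Sum>i\<in>I. \<Sum>j\<in>I. (\<bar>\<theta> j s - \<theta> i s\<bar> - \<theta>inf i j)^2)"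
      unfolding Ek_def \<phi>_def by (intro tendsto_intros phi_lim dlim)
    then show ?thesis unfolding kb_energy_def I_def by simp
  qed
  define Lim where "Lim s = 1/2 * (\<Sum>i\<in>I. 2 * \<omega> i s * W i s) + \<kappa>2 / (4 * real N) * (\<Sum>i\<in>I. \<Sum>j\<in>I. 2 * (\<bar>\<theta> j s - \<theta> i s\<bar> - \<theta>inf i j) * (sgn (\<theta> j s - \<theta> i s) * (\<omega> j s - \<omega> i s)))" for s
  have Dlim: "(\<lambda>k. Dk k s) \<longlonglongrightarrow> Lim s" for s
    unfolding Dk_def Lim_def \<phi>_def by (intro tendsto_intros phi_lim sgn_lim dlim)
  have LimP: "Lim s = - kb_production N \<kappa>0 \<kappa>1 \<theta> \<omega> s" for s
  proof -
    define a where "a i j = \<kappa>0 * cos (\<theta> j s - \<theta> i s) + \<kappa>1" for i j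
    define b where "b i j = (\<bar>\<theta> j s - \<theta> i s\<bar> - \<theta>inf i j) * sgn (\<theta> j s - \<theta> i s)" for i j
    have asym: "a i j = a j i" if "i \<in> I" "j \<in> I" for i j
      unfolding a_def by (metis cos_minus minus_diff_eq)
    have bas: "b i j = - b j i" if "i \<in> I" "j \<in> I" for i j
    proof -
      have c: "\<theta>inf i j = \<theta>inf j i" using hsym that unfolding I_def by blast
      have sg: "sgn (\<theta> i s - \<theta> j s) = - sgn (\<theta> j s - \<theta> i s)" by (metis minus_diff_eq sgn_minus)
      show ?thesis unfolding b_def c sg by (simp add: abs_minus_commute)
    qed
    have X1: "(\<Sum>i\<in>I. \<Sum>j\<in>I. \<omega> i s * (a i j * (\<omega> j s - \<omega> i s))) = - (1/2) * (\<Sum>i\<in>I. \<Sum>j\<in>I. a i j * (\<omega> j s - \<omega> i s)^2)"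
      by (rule alg1[OF finI asym])
    have Y: "(\<Sum>i\<in>I. \<Sum>j\<in>I. b i j * (\<omega> j s - \<omega> i s)) = - 2 * (\<Sum>i\<in>I. \<omega> i s * (\<Sum>j\<in>I. b i j))"
      by (rule alg2[OF finI bas])
    have W': "W i s = 1 / real N * (\<Sum>j\<in>I. a i j * (\<omega> j s - \<omega> i s)) + \<kappa>2 / real N * (\<Sum>j\<in>I. b i j)" for i
      unfolding W_def a_def b_def ..
    have pi: "1/2 * (2 * \<omega> i s * W i s) = 1 / real N * (\<omega> i s * (\<Sum>j\<in>I. a i j * (\<omega> j s - \<omega> i s))) + \<kappa>2 / real N * (\<omega> i s * (\<Sum>j\<in>I. b i j))" for i
      unfolding W' by (simp add: algebra_simps)
    have L1: "1/2 * (\<Sum>i\<in>I. 2 * \<omega> i s * W i s) = 1 / real N * (\<Sum>i\<in>I. \<Sum>j\<in>I. \<omega> i s * (a i j * (\<omega> j s - \<omega> i s))) + \<kappa>2 / real N * (\<Sum>i\<in>I. \<omega> i s * (\<Sum>j\<in>I. b i j))"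
    proof -
      have "1/2 * (\<Sum>i\<in>I. 2 * \<omega> i s * W i s) = (\<Sum>i\<in>I. 1/2 * (2 * \<omega> i s * W i s))"
        by (simp only: sum_distrib_left)
      also have "\<dots> = (\<Sum>i\<in>I. 1 / real N * (\<omega> i s * (\<Sum>j\<in>I. a i j * (\<omega> j s - \<omega> i s))) + \<kappa>2 / real N * (\<omega> i s * (\<Sum>j\<in>I. b i j)))"
        by (simp only: pi)
      also have "\<dots> = 1 / real N * (\<Sum>i\<in>I. \<omega> i s * (\<Sum>j\<in>I. a i j * (\<omega> j s - \<omega> i s))) + \<kappa>2 / real N * (\<Sum>i\<in>I. \<omega> i s * (\<Sum>j\<in>I. b i j))"
        by (simp only: sum.distrib sum_distrib_left)
      also have "(\<Sum>i\<in>I. \<omega> i s * (\<Sum>j\<in>I. a i j * (\<omega> j s - \<omega> i s))) = (\<Sum>i\<in>I. \<Sum>j\<in>I. \<omega> i s * (a i j * (\<omega> j s - \<omega> i s)))"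
        by (simp only: sum_distrib_left)
      finally show ?thesis .
    qed
    have L2: "(\<Sum>i\<in>I. \<Sum>j\<in>I. 2 * (\<bar>\<theta> j s - \<theta> i s\<bar> - \<theta>inf i j) * (sgn (\<theta> j s - \<theta> i s) * (\<omega> j s - \<omega> i s)))
        = 2 * (\<Sum>i\<in>I. \<Sum>j\<in>I. b i j * (\<omega> j s - \<omega> i s))"
      unfolding b_def sum_distrib_left by (intro sum.cong refl) (simp add: algebra_simps)
    have P: "kb_production N \<kappa>0 \<kappa>1 \<theta> \<omega> s = 1 / (2 * real N) * (\<Sum>i\<in>I. \<Sum>j\<in>I. a i j * (\<omega> j s - \<omega> i s)^2)"
      unfolding kb_production_def a_def I_def by simp
    show ?thesis unfolding Lim_def L1 L2 X1 Y P using Npos by (simp add: field_simps)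
  qed
  define V where "V i s = 1 / real N * (\<Sum>j\<in>I. (\<kappa>0 + \<kappa>1) * \<bar>\<omega> j s - \<omega> i s\<bar>) + \<kappa>2 / real N * (\<Sum>j\<in>I. \<bar>\<theta> j s - \<theta> i s\<bar> + \<bar>\<theta>inf i j\<bar>)" for i s
  define h where "h s = (\<Sum>i\<in>I. \<bar>\<omega> i s\<bar> * V i s) + \<kappa>2 / (4 * real N) * (\<Sum>i\<in>I. \<Sum>j\<in>I. 2 * (\<bar>\<theta> j s - \<theta> i s\<bar> + 1 + \<bar>\<theta>inf i j\<bar>) * \<bar>\<omega> j s - \<omega> i s\<bar>)" for s
  have hint: "h integrable_on {0..t}"
    by (rule integrable_continuous_interval)
      (unfold h_def V_def, use Npos in \<open>auto intro!: continuous_intros cth com\<close>)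
  have hb: "norm (Dk k s) \<le> h s" if "s \<in> {0..t}" for k s
  proof -
    have e1: "1/2 * (\<Sum>i\<in>I. 2 * \<omega> i s * W i s) = (\<Sum>i\<in>I. \<omega> i s * W i s)" by (simp add: sum_distrib_left)
    have b1: "\<bar>\<Sum>i\<in>I. \<omega> i s * W i s\<bar> \<le> (\<Sum>i\<in>I. \<bar>\<omega> i s\<bar> * V i s)"
    proof (rule order_trans[OF sum_abs], rule sum_mono)
      fix i
      have "\<bar>W i s\<bar> \<le> V i s" unfolding W_def V_def by (rule absW[OF hk0 hk1 hk2 Npos])
      then show "\<bar>\<omega> i s * W i s\<bar> \<le> \<bar>\<omega> i s\<bar> * V i s" by (simp add: abs_mult mult_left_mono)
    qed
    have b2: "\<bar>\<Sum>i\<in>I. \<Sum>j\<in>I. 2 * (\<phi> k (\<theta> j s - \<theta> i s) - \<theta>inf i j) * (((\<theta> j s - \<theta> i s) / \<phi> k (\<theta> j s - \<theta> i s)) * (\<omega> j s - \<omega> i s))\<bar>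
       \<le> (\<Sum>i\<in>I. \<Sum>j\<in>I. 2 * (\<bar>\<theta> j s - \<theta> i s\<bar> + 1 + \<bar>\<theta>inf i j\<bar>) * \<bar>\<omega> j s - \<omega> i s\<bar>)"
      by (rule order_trans[OF sum_abs], rule sum_mono, rule order_trans[OF sum_abs], rule sum_mono)
        (unfold \<phi>_def, rule absterm[OF dpos])
    have k: "0 \<le> \<kappa>2 / (4 * real N)" using hk2 Npos by simp
    have b3: "\<bar>\<kappa>2 / (4 * real N) * (\<Sum>i\<in>I. \<Sum>j\<in>I. 2 * (\<phi> k (\<theta> j s - \<theta> i s) - \<theta>inf i j) * (((\<theta> j s - \<theta> i s) / \<phi> k (\<theta> j s - \<theta> i s)) * (\<omega> j s - \<omega> i s)))\<bar>
       \<le> \<kappa>2 / (4 * real N) * (\<Sum>i\<in>I. \<Sum>j\<in>I. 2 * (\<bar>\<theta> j s - \<theta> i s\<bar> + 1 + \<bar>\<theta>inf i j\<bar>) * \<bar>\<omega> j s - \<omega> i s\<bar>)"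
      unfolding abs_mult abs_of_nonneg[OF k] by (rule mult_left_mono[OF b2 k])
    show ?thesis unfolding real_norm_def Dk_def h_def e1
      by (rule order_trans[OF abs_triangle_ineq add_mono[OF b1 b3]])
  qed
  have "((\<lambda>s. - kb_production N \<kappa>0 \<kappa>1 \<theta> \<omega> s) has_integral
        (kb_energy N \<kappa>2 \<theta>inf \<theta> \<omega> t - kb_energy N \<kappa>2 \<theta>inf \<theta> \<omega> 0)) {0..t}"
  proof (rule has_integral_dominated_convergence[OF ftc hint])
    show "\<forall>x\<in>{0..t}. norm (Dk k x) \<le> h x" for k using hb by blast
    show "\<forall>x\<in>{0..t}. (\<lambda>k. Dk k x) \<longlonglongrightarrow> - kb_production N \<kappa>0 \<kappa>1 \<theta> \<omega> x"
      using Dlim LimP by simp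
    show "(\<lambda>k. Ek k t - Ek k 0) \<longlonglongrightarrow> kb_energy N \<kappa>2 \<theta>inf \<theta> \<omega> t - kb_energy N \<kappa>2 \<theta>inf \<theta> \<omega> 0"
      by (intro tendsto_diff Elim)
  qed
  from has_integral_neg[OF this]
  have "(kb_production N \<kappa>0 \<kappa>1 \<theta> \<omega> has_integral
        (kb_energy N \<kappa>2 \<theta>inf \<theta> \<omega> 0 - kb_energy N \<kappa>2 \<theta>inf \<theta> \<omega> t)) {0..t}"
    by simp
  then show "kb_energy N \<kappa>2 \<theta>inf \<theta> \<omega> t + integral {0..t} (kb_production N \<kappa>0 \<kappa>1 \<theta> \<omega>) = kb_energy N \<kappa>2 \<theta>inf \<theta> \<omega> 0"
    by (simp add: integral_unique)
qed

end
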